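(* Let $t\ge 1$ and let $0<m_1<m_2<\dots<m_t$ be integers. Then the multi-delimiter code $D_{m_1,\ldots,m_t}$ is complete, i.e. for every binary word $w\notin D_{m_1,\ldots,m_t}$ the set $D_{m_1,\ldots,m_t}\cup\{w\}$ is not uniquely decodable.
   Context: Binary words are elements of $\{0,1\}^*$; $1^r$ denotes the word of $r$ consecutive ones. For integers $0<m_1<\dots<m_t$, the multi-delimiter code $D_{m_1,\ldots,m_t}$ is the set consisting of the words $1^{m_i}0$ for $i=1,\dots,t$, together with all binary words $w$ satisfying: (i) for no $i$ does $w$ start with $1^{m_i}0$; (ii) $w$ ends with the suffix $01^{m_i}0$ for some $i$; (iii) for every $i$, the word $01^{m_i}0$ occurs in $w$ nowhere except as a suffix of $w$. A set of binary words is uniquely decodable if every finite concatenation of its words has a unique factorization into words of the set. *)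

theory Defs
  imports Main "HOL-Library.Sublist"
begin

text \<open>Binary words: lists of booleans, True = 1, False = 0.\<close>
type_synonym word = "bool list"

definition ones :: "nat \<Rightarrow> word" where
  "ones r = replicate r True"

definition occurs_at :: "word \<Rightarrow> word \<Rightarrow> nat \<Rightarrow> bool" where
  "occurs_at u w i \<longleftrightarrow> i + length u \<le> length w \<and> take (length u) (drop i w) = u"

text \<open>Multi-delimiter code D_{m_1,...,m_t}; the delimiter lengths are given as the set M.\<close>
definition multi_delim_code :: "nat set \<Rightarrow> word set" where
  "multi_delim_code M =
     {ones m @ [False] | m. m \<in> M} \<union>
     {w. (\<forall>m\<in>M. \<not> prefix (ones m @ [False]) w)
       \<and> (\<exists>m\<in>M. suffix ([False] @ ones m @ [False]) w)
       \<and> (\<forall>m\<in>M. \<forall>i. occurs_at ([False] @ ones m @ [False]) w i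
              \<longrightarrow> i + length ([False] @ ones m @ [False]) = length w)}"

definition uniquely_decodable :: "word set \<Rightarrow> bool" where
  "uniquely_decodable C \<longleftrightarrow>
     (\<forall>xs ys. set xs \<subseteq> C \<longrightarrow> set ys \<subseteq> C \<longrightarrow> concat xs = concat ys \<longrightarrow> xs = ys)"

end

theory Submission
  imports Defs
begin

definition pat :: "nat \<Rightarrow> word" where
  "pat k = [False] @ ones k @ [False]"

lemma len_pat[simp]: "length (pat k) = k + 2"
  by (simp add: pat_def ones_def)

lemma pat_nth0[simp]: "pat k ! 0 = False"
  by (simp add: pat_def)

lemma pat_nth_mid: "1 \<le> j \<Longrightarrow> j \<le> k \<Longrightarrow> pat k ! j = True"
  by (simp add: pat_def ones_def nth_append)

lemma pat_nth_last: "pat k ! (k+1) = False"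
  by (simp add: pat_def ones_def nth_append)

lemma D_char: "w \<in> multi_delim_code M \<longleftrightarrow>
   (\<exists>m\<in>M. w = ones m @ [False]) \<or>
   ((\<forall>m\<in>M. \<not> prefix (ones m @ [False]) w)
       \<and> (\<exists>m\<in>M. suffix (pat m) w)
       \<and> (\<forall>m\<in>M. \<forall>i. occurs_at (pat m) w i \<longrightarrow> i + length (pat m) = length w))"
  unfolding multi_delim_code_def pat_def by auto

lemma occ_nth:
  assumes "occurs_at u y i" "j < length u"
  shows "y ! (i+j) = u ! j"
proof -
  have "u ! j = take (length u) (drop i y) ! j" using assms(1) by (simp add: occurs_at_def)
  also have "\<dots> = drop i y ! j" using assms(2) by simp
  also have "\<dots> = y ! (i+j)" using assms unfolding occurs_at_def by simp
  finally show ?thesis by simp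
qed

lemma occ_take:
  assumes "occurs_at u (take e y) i"
  shows "occurs_at u y i \<and> i + length u \<le> e"
  using assms unfolding occurs_at_def
  by (auto simp: take_drop min_def split: if_splits)

lemma pat_in_D:
  assumes "m \<in> M" "\<forall>k\<in>M. 0 < k"
  shows "pat m \<in> multi_delim_code M"
proof -
  have "\<forall>k\<in>M. \<not> prefix (ones k @ [False]) (pat m)"
  proof (intro ballI notI)
    fix k assume k: "k \<in> M" and p: "prefix (ones k @ [False]) (pat m)"
    then have "(ones k @ [False]) ! 0 = pat m ! 0"
      by (metis length_greater_0_conv nth_append_length prefix_def nth_append Nil_is_append_conv not_Cons_self2)
    with assms k show False by (simp add: ones_def nth_append)
  qed
  moreover have "\<forall>k\<in>M. \<forall>i. occurs_at (pat k) (pat m) i \<longrightarrow> i + length (pat k) = length (pat m)"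
  proof (intro ballI allI impI)
    fix k i assume k: "k \<in> M" and o: "occurs_at (pat k) (pat m) i"
    have le: "i + k + 2 \<le> m + 2" using o by (simp add: occurs_at_def)
    have i0: "i = 0"
    proof (rule ccontr)
      assume "i \<noteq> 0"
      have "pat m ! (i+0) = pat k ! 0" using occ_nth[OF o, of 0] by simp
      moreover have "pat m ! i = True" using \<open>i \<noteq> 0\<close> le assms k by (intro pat_nth_mid) auto
      ultimately show False by simp
    qed
    have "k = m"
    proof (rule ccontr)
      assume "k \<noteq> m"
      then have "k < m" using le by simp
      have "pat m ! (i+(k+1)) = pat k ! (k+1)" using occ_nth[OF o, of "k+1"] by simp
      moreover have "pat m ! (k+1) = True" using \<open>k < m\<close> by (intro pat_nth_mid) auto
      ultimately show False using i0 pat_nth_last by simp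
    qed
    then show "i + length (pat k) = length (pat m)" using i0 by simp
  qed
  ultimately show ?thesis unfolding D_char using assms by auto
qed

lemma ones_in_D: "k \<in> M \<Longrightarrow> ones k @ [False] \<in> multi_delim_code M"
  unfolding D_char by auto

lemma main:
  assumes m: "m \<in> M" and pos: "\<forall>k\<in>M. 0 < k"
  shows "\<exists>ys. set ys \<subseteq> multi_delim_code M \<and> concat ys = x @ pat m"
proof (induction x rule: length_induct)
  case (1 x)
  define y where "y = x @ pat m"
  let ?D = "multi_delim_code M"
  have ynth: "y ! j = pat m ! (j - length x)" if "length x \<le> j" for j
    using that by (simp add: y_def nth_append)
  show ?case
  proof (cases "\<exists>k\<in>M. prefix (ones k @ [False]) y")
    case True
    then obtain k z where k: "k \<in> M" and yz: "y = (ones k @ [False]) @ z"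
      by (auto simp: prefix_def)
    show ?thesis
    proof (cases "k + 1 \<le> length x")
      case True
      have "take (k+1) y = ones k @ [False]" using yz by (simp add: ones_def)
      moreover have "take (k+1) y = take (k+1) x" using True by (simp add: y_def)
      ultimately have xe: "x = (ones k @ [False]) @ drop (k+1) x"
        by (metis append_take_drop_id)
      have "length (drop (k+1) x) < length x" using True by simp
      with "1.IH" obtain ys where ys: "set ys \<subseteq> ?D" "concat ys = drop (k+1) x @ pat m"
        by blast
      show ?thesis
        apply (rule exI[of _ "(ones k @ [False]) # ys"])
        using ys ones_in_D[OF k] xe by (simp add: y_def)
    next
      case False
      have yk: "y ! j = (ones k @ [False]) ! j" if "j \<le> k" for j
        using that yz by (simp add: nth_append ones_def)
      have "length x = k"
      proof (rule ccontr)
        assume "length x \<noteq> k"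
        then have "length x < k" using False by simp
        have "y ! length x = False" using ynth[of "length x"] by simp
        moreover have "y ! length x = True" using yk[of "length x"] \<open>length x < k\<close>
          by (simp add: nth_append ones_def)
        ultimately show False by simp
      qed
      then have "x = ones k"
        using yz unfolding y_def pat_def ones_def
        by (simp add: \<open>length x = k\<close>[symmetric])
      show ?thesis
        apply (rule exI[of _ "[ones k @ [False], ones m @ [False]]"])
        using ones_in_D[OF k] ones_in_D[OF m] \<open>x = ones k\<close> by (simp add: pat_def)
    qed
  next
    case False
    define E where "E = {e. \<exists>k\<in>M. \<exists>i. occurs_at (pat k) y i \<and> e = i + length (pat k)}"
    have "occurs_at (pat m) y (length x)" by (simp add: occurs_at_def y_def)
    then have "length y \<in> E" using m by (auto simp: E_def y_def)
    define e where "e = Least (\<lambda>e. e \<in> E)"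
    have eE: "e \<in> E" unfolding e_def by (rule LeastI[of "\<lambda>e. e \<in> E", OF \<open>length y \<in> E\<close>])
    have emin: "\<And>e'. e' \<in> E \<Longrightarrow> e \<le> e'" unfolding e_def by (rule Least_le)
    from eE obtain k i where k: "k \<in> M" and oi: "occurs_at (pat k) y i" and ei: "e = i + (k+2)"
      by (auto simp: E_def)
    have ely: "e \<le> length y" using oi ei by (simp add: occurs_at_def)
    define p where "p = take e y"
    have lp: "length p = e" using ely by (simp add: p_def)
    have pD: "p \<in> ?D"
    proof -
      have a: "\<forall>k\<in>M. \<not> prefix (ones k @ [False]) p"
        using False unfolding p_def by (meson prefix_order.dual_order.trans take_is_prefix)
      have "take i y @ pat k = p"
        using oi ei unfolding p_def occurs_at_def
        by (metis add.commute len_pat take_add)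
      then have b: "suffix (pat k) p" by (auto simp: suffix_def)
      have c: "\<forall>k'\<in>M. \<forall>i'. occurs_at (pat k') p i' \<longrightarrow> i' + length (pat k') = length p"
      proof (intro ballI allI impI)
        fix k' i' assume k': "k' \<in> M" and o: "occurs_at (pat k') p i'"
        from occ_take[OF o[unfolded p_def]] have "occurs_at (pat k') y i'" "i' + length (pat k') \<le> e"
          by auto
        moreover then have "i' + length (pat k') \<in> E" using k' by (auto simp: E_def)
        ultimately show "i' + length (pat k') = length p" using emin lp by force
      qed
      show ?thesis unfolding D_char using a b c k by blast
    qed
    have ysplit: "y = p @ drop e y" by (simp add: p_def)
    have epos: "0 < e" using ei by simp
    show ?thesis
    proof (cases "e \<le> length x")
      case True
      have dx: "drop e y = drop e x @ pat m" using True by (simp add: y_def)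
      have "length (drop e x) < length x" using True epos by simp
      with "1.IH" obtain ys where ys: "set ys \<subseteq> ?D" "concat ys = drop e x @ pat m"
        by blast
      show ?thesis
        apply (rule exI[of _ "p # ys"])
      proof -
        have "x @ pat m = p @ concat ys" using ys(2) dx ysplit unfolding y_def by simp
        then show "set (p # ys) \<subseteq> ?D \<and> concat (p # ys) = x @ pat m" using ys(1) pD by simp
      qed
    next
      case False
      have "y ! (e - 1) = pat k ! (k+1)"
        using occ_nth[OF oi, of "k+1"] ei by simp
      then have yf: "y ! (e - 1) = False" using pat_nth_last[of k] by simp
      have "e - 1 = length x \<or> e - 1 = length x + m + 1"
      proof (rule ccontr)
        assume "\<not> ?thesis"
        then have "1 \<le> e - 1 - length x" "e - 1 - length x \<le> m"
          using False ely by (auto simp: y_def)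
        then have "pat m ! (e - 1 - length x) = True" by (rule pat_nth_mid)
        with ynth[of "e-1"] yf False show False by simp
      qed
      then show ?thesis
      proof
        assume "e - 1 = length x"
        then have "e = length x + 1" using epos by simp
        then have "drop e y = ones m @ [False]"
          by (simp add: y_def pat_def)
        then show ?thesis
          apply (intro exI[of _ "[p, ones m @ [False]]"])
          using pD ones_in_D[OF m] ysplit y_def by auto
      next
        assume "e - 1 = length x + m + 1"
        then have "e = length y" using epos by (simp add: y_def)
        then have "p = y" by (simp add: p_def)
        then show ?thesis
          apply (intro exI[of _ "[p]"])
          using pD y_def by auto
      qed
    qed
  qed
qed

theorem theorem3:
  fixes ms :: "nat list" and w :: "bool list"
  assumes "ms \<noteq> []"
    and "sorted_wrt (<) ms"
    and "\<forall>m\<in>set ms. 0 < m"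
    and "w \<notin> multi_delim_code (set ms)"
  shows "\<not> uniquely_decodable (multi_delim_code (set ms) \<union> {w})"
proof
  assume ud: "uniquely_decodable (multi_delim_code (set ms) \<union> {w})"
  define m where "m = hd ms"
  have m: "m \<in> set ms" using assms(1) by (simp add: m_def)
  obtain ys where ys: "set ys \<subseteq> multi_delim_code (set ms)" "concat ys = w @ pat m"
    using main[OF m assms(3)] by blast
  have pm: "pat m \<in> multi_delim_code (set ms)" using pat_in_D[OF m assms(3)] .
  have s1: "set [w, pat m] \<subseteq> multi_delim_code (set ms) \<union> {w}" using pm by simp
  have s2: "set ys \<subseteq> multi_delim_code (set ms) \<union> {w}" using ys(1) by blast
  have "concat [w, pat m] = concat ys" using ys(2) by simp
  then have "[w, pat m] = ys"
    using ud s1 s2 unfolding uniquely_decodable_def by blast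
  then show False using ys(1) assms(4) by auto
qed

end
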